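(* Let $A_1,A_2,A_3$ be $m\times m$ complex positive semidefinite matrices, let $G$ be a subgroup of the symmetric group $S_m$, and let $\chi$ be an irreducible character of $G$. Then $$d^G_\chi(A_1+A_2+A_3)+d^G_\chi(A_1)+d^G_\chi(A_2)+d^G_\chi(A_3)-\big(d^G_\chi(A_1+A_2)+d^G_\chi(A_1+A_3)+d^G_\chi(A_2+A_3)\big)\;\ge\;0.$$
   Context: For a subgroup $G$ of $S_m$ and a character $\chi$ of $G$, the generalized matrix function on $m\times m$ matrices $X=(x_{ij})$ is $d^G_\chi(X)=\sum_{\sigma\in G}\chi(\sigma)\prod_{t=1}^m x_{t\,\sigma(t)}$. The inequality asserts that this (a priori complex) expression is a nonnegative real number. *)

theory Defs
  imports "Jordan_Normal_Form.Matrix" "Jordan_Normal_Form.Conjugate" "HOL-Combinatorics.Permutations"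
begin

text \<open>Indices run over {0..<m} instead of {1..m}.\<close>

definition psd_mat :: "nat \<Rightarrow> complex mat \<Rightarrow> bool" where
  "psd_mat m A \<longleftrightarrow> A \<in> carrier_mat m m
     \<and> (\<forall>i<m. \<forall>j<m. A $$ (i, j) = cnj (A $$ (j, i)))
     \<and> (\<forall>v \<in> carrier_vec m. 0 \<le> (\<Sum>i<m. \<Sum>j<m. cnj (v $ i) * A $$ (i, j) * v $ j))"

definition perm_subgroup :: "nat \<Rightarrow> (nat \<Rightarrow> nat) set \<Rightarrow> bool" where
  "perm_subgroup m G \<longleftrightarrow> (\<forall>\<sigma>\<in>G. \<sigma> permutes {..<m}) \<and> id \<in> G
     \<and> (\<forall>\<sigma>\<in>G. \<forall>\<tau>\<in>G. \<sigma> \<circ> \<tau> \<in> G) \<and> (\<forall>\<sigma>\<in>G. inv_into UNIV \<sigma> \<in> G)"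

definition mat_trace :: "complex mat \<Rightarrow> complex" where
  "mat_trace A = (\<Sum>i<dim_row A. A $$ (i, i))"

definition is_rep :: "(nat \<Rightarrow> nat) set \<Rightarrow> nat \<Rightarrow> ((nat \<Rightarrow> nat) \<Rightarrow> complex mat) \<Rightarrow> bool" where
  "is_rep G n \<rho> \<longleftrightarrow> (\<forall>\<sigma>\<in>G. \<rho> \<sigma> \<in> carrier_mat n n) \<and> \<rho> id = 1\<^sub>m n
     \<and> (\<forall>\<sigma>\<in>G. \<forall>\<tau>\<in>G. \<rho> (\<sigma> \<circ> \<tau>) = \<rho> \<sigma> * \<rho> \<tau>)"

definition is_subspace :: "nat \<Rightarrow> complex vec set \<Rightarrow> bool" where
  "is_subspace n W \<longleftrightarrow> W \<subseteq> carrier_vec n \<and> 0\<^sub>v n \<in> W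
     \<and> (\<forall>v\<in>W. \<forall>w\<in>W. v + w \<in> W) \<and> (\<forall>c. \<forall>v\<in>W. c \<cdot>\<^sub>v v \<in> W)"

definition irreducible_rep :: "(nat \<Rightarrow> nat) set \<Rightarrow> nat \<Rightarrow> ((nat \<Rightarrow> nat) \<Rightarrow> complex mat) \<Rightarrow> bool" where
  "irreducible_rep G n \<rho> \<longleftrightarrow> is_rep G n \<rho> \<and> n \<ge> 1
     \<and> (\<forall>W. is_subspace n W \<and> (\<forall>\<sigma>\<in>G. \<forall>v\<in>W. \<rho> \<sigma> *\<^sub>v v \<in> W)
            \<longrightarrow> W = {0\<^sub>v n} \<or> W = carrier_vec n)"

definition irreducible_character :: "(nat \<Rightarrow> nat) set \<Rightarrow> ((nat \<Rightarrow> nat) \<Rightarrow> complex) \<Rightarrow> bool" where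
  "irreducible_character G \<chi> \<longleftrightarrow>
     (\<exists>n \<rho>. irreducible_rep G n \<rho> \<and> (\<forall>\<sigma>\<in>G. \<chi> \<sigma> = mat_trace (\<rho> \<sigma>)))"

definition gen_mat_fun :: "nat \<Rightarrow> (nat \<Rightarrow> nat) set \<Rightarrow> ((nat \<Rightarrow> nat) \<Rightarrow> complex) \<Rightarrow> complex mat \<Rightarrow> complex" where
  "gen_mat_fun m G \<chi> X = (\<Sum>\<sigma>\<in>G. \<chi> \<sigma> * (\<Prod>t<m. X $$ (t, \<sigma> t)))"

end

theory Submission
  imports Defs "Jordan_Normal_Form.Determinant"
begin



definition qf :: "nat \<Rightarrow> (nat \<Rightarrow> nat \<Rightarrow> complex) \<Rightarrow> (nat \<Rightarrow> complex) \<Rightarrow> complex" where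
  "qf n A v = (\<Sum>i<n. \<Sum>j<n. cnj (v i) * A i j * v j)"

definition psdf :: "nat \<Rightarrow> (nat \<Rightarrow> nat \<Rightarrow> complex) \<Rightarrow> bool" where
  "psdf n A \<longleftrightarrow> (\<forall>i<n. \<forall>j<n. A i j = cnj (A j i)) \<and> (\<forall>v. 0 \<le> qf n A v)"

lemma qf_two:
  assumes "i \<noteq> k"  "i < N" "k < N"
  shows "qf N A (\<lambda>j. if j = i then x else if j = k then y else 0) =
    cnj x * A i i * x + cnj x * A i k * y + cnj y * A k i * x + cnj y * A k k * y"
proof -
  have inner: "(\<Sum>j<N. c * A a j * (if j = i then x else if j = k then y else 0)) = c * A a i * x + c * A a k * y" for a c
  proof -
    have "(\<Sum>j<N. c * A a j * (if j = i then x else if j = k then y else 0)) =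
      (\<Sum>j<N. (if j = i then c * A a j * x else 0) + (if j = k then c * A a j * y else 0))"
      by (rule sum.cong) (use assms in auto)
    also have "\<dots> = c * A a i * x + c * A a k * y" using assms by (simp add: sum.distrib)
    finally show ?thesis .
  qed
  have "qf N A (\<lambda>j. if j = i then x else if j = k then y else 0) =
     (\<Sum>a<N. cnj (if a = i then x else if a = k then y else 0) * A a i * x + cnj (if a = i then x else if a = k then y else 0) * A a k * y)"
    unfolding qf_def using inner by simp
  also have "\<dots> = (\<Sum>a<N. (if a = i then cnj x * A i i * x + cnj x * A i k * y else 0) + (if a = k then cnj y * A k i * x + cnj y * A k k * y else 0))"
    by (rule sum.cong) (use assms in auto)
  also have "\<dots> = cnj x * A i i * x + cnj x * A i k * y + cnj y * A k i * x + cnj y * A k k * y"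
    using assms by (simp add: sum.distrib)
  finally show ?thesis .
qed

lemma psdf_diag_zero:
  assumes P: "psdf N A" and k: "k < N" and i: "i < N" and z: "A k k = 0"
  shows "A i k = 0"
proof (rule ccontr)
  assume a0: "A i k \<noteq> 0"
  then have ik: "i \<noteq> k" using z by auto
  define a where "a = A i k"
  have aki: "A k i = cnj a" using P i k unfolding psdf_def a_def by blast
  define r where "r = (cmod a)^2"
  have e: "a * cnj a = complex_of_real r" unfolding r_def by (rule complex_norm_square[symmetric])
  have pos: "0 < r" using a0 a_def r_def by simp
  define t where "t = (Re (A i i) + 1) / (2 * r)"
  define y where "y = - complex_of_real t * cnj a"
  have "0 \<le> qf N A (\<lambda>j. if j = i then 1 else if j = k then y else 0)" using P unfolding psdf_def by blast
  also have "\<dots> = A i i + a * y + cnj y * cnj a"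
    using qf_two[OF ik i k, of A 1 y] z aki a_def by simp
  also have "\<dots> = A i i - complex_of_real t * (a * cnj a) - complex_of_real t * (a * cnj a)"
    unfolding y_def by (simp add: algebra_simps)
  also have "\<dots> = A i i - complex_of_real (2 * t * r)" unfolding e by simp
  finally have "0 \<le> Re (A i i) - 2 * t * r" by (simp add: less_eq_complex_def)
  also have "Re (A i i) - 2 * t * r = -1" unfolding t_def using pos by (simp add: field_simps)
  finally show False by simp
qed

lemma qf_Suc:
  "qf (Suc n) A v = qf n A v + (\<Sum>j<n. cnj (v n) * A n j * v j) + (\<Sum>i<n. cnj (v i) * A i n * v n)
      + cnj (v n) * A n n * v n"
  unfolding qf_def by (simp add: sum.distrib algebra_simps)

lemma qf_cong: "(\<And>i. i < n \<Longrightarrow> v i = w i) \<Longrightarrow> qf n A v = qf n A w"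
  unfolding qf_def by (intro sum.cong refl) auto

lemma qf_rank1:
  "qf N (\<lambda>i j. A i j - cnj (g i) * g j) v = qf N A v - cnj (\<Sum>j<N. g j * v j) * (\<Sum>j<N. g j * v j)"
proof -
  have "qf N (\<lambda>i j. A i j - cnj (g i) * g j) v = qf N A v - (\<Sum>i<N. \<Sum>j<N. cnj (g i * v i) * (g j * v j))"
    unfolding qf_def by (simp add: sum_subtractf algebra_simps)
  also have "(\<Sum>i<N. \<Sum>j<N. cnj (g i * v i) * (g j * v j)) = cnj (\<Sum>j<N. g j * v j) * (\<Sum>j<N. g j * v j)"
    by (simp add: sum_product)
  finally show ?thesis .
qed

lemma gram:
  "psdf n A \<Longrightarrow> \<exists>F. \<forall>i<n. \<forall>j<n. A i j = (\<Sum>k<n. cnj (F k i) * F k j)"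
proof (induction n arbitrary: A)
  case 0
  then show ?case by auto
next
  case (Suc n)
  have herm: "\<And>i j. i < Suc n \<Longrightarrow> j < Suc n \<Longrightarrow> A i j = cnj (A j i)" using Suc.prems unfolding psdf_def by blast
  have nonneg: "\<And>v. 0 \<le> qf (Suc n) A v" using Suc.prems unfolding psdf_def by blast
  have dnn: "0 \<le> A n n"
  proof -
    have "0 \<le> qf (Suc n) A (\<lambda>j. if j = n then 1 else 0)" by (rule nonneg)
    also have "qf (Suc n) A (\<lambda>j. if j = n then 1 else 0) = A n n"
      unfolding qf_Suc by (simp add: qf_def)
    finally show ?thesis .
  qed
  show ?case
  proof (cases "A n n = 0")
    case True
    have col: "A i n = 0" if "i < Suc n" for i using psdf_diag_zero[OF Suc.prems _ that True] by simp
    have row: "A n j = 0" if "j < Suc n" for j using herm[OF _ that, of n] col[OF that] by simp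
    have "psdf n A" unfolding psdf_def
    proof (intro conjI allI impI)
      fix i j assume "i < n" "j < n" then show "A i j = cnj (A j i)" by (intro herm) auto
    next
      fix v
      have "0 \<le> qf (Suc n) A (v(n := 0))" by (rule nonneg)
      also have "qf (Suc n) A (v(n := 0)) = qf n A (v(n:=0))" unfolding qf_Suc by simp
      also have "\<dots> = qf n A v" by (rule qf_cong) auto
      finally show "0 \<le> qf n A v" .
    qed
    then obtain F where F: "\<forall>i<n. \<forall>j<n. A i j = (\<Sum>k<n. cnj (F k i) * F k j)" using Suc.IH by blast
    define F' where "F' = (\<lambda>k j. if k < n \<and> j < n then F k j else 0)"
    have "\<forall>i<Suc n. \<forall>j<Suc n. A i j = (\<Sum>k<Suc n. cnj (F' k i) * F' k j)"
    proof (intro allI impI)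
      fix i j assume i: "i < Suc n" and j: "j < Suc n"
      show "A i j = (\<Sum>k<Suc n. cnj (F' k i) * F' k j)"
      proof (cases "i < n \<and> j < n")
        case True
        then show ?thesis using F unfolding F'_def by simp
      next
        case False
        then have "i = n \<or> j = n" using i j by auto
        then show ?thesis using row col i j unfolding F'_def by auto
      qed
    qed
    then show ?thesis by blast
  next
    case False
    define d where "d = Re (A n n)"
    have dA: "A n n = complex_of_real d" using dnn unfolding d_def by (simp add: less_eq_complex_def complex_eq_iff)
    have dpos: "d > 0" using dnn False dA by (auto simp: less_eq_complex_def)
    define s where "s = sqrt d"
    have spos: "s > 0" using dpos s_def by simp
    have ss0: "s * s = d" using dpos s_def by simp
    have ss: "complex_of_real s * complex_of_real s = complex_of_real d" using ss0 by (metis of_real_mult)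
    define g where "g = (\<lambda>j. A n j / complex_of_real s)"
    define A' where "A' = (\<lambda>i j. A i j - cnj (g i) * g j)"
    have gg: "cnj (g i) * g j = A i n * A n j / A n n" if "i < Suc n" for i j
    proof -
      have "cnj (g i) * g j = cnj (A n i) * A n j / (complex_of_real s * complex_of_real s)"
        unfolding g_def by simp
      also have "\<dots> = A i n * A n j / A n n" using herm[OF that, of n] dA ss by simp
      finally show ?thesis .
    qed
    have A'col: "A' i n = 0" if "i < Suc n" for i
      unfolding A'_def using gg[OF that, of n] False by simp
    have A'row: "A' n j = 0" if "j < Suc n" for j
    proof -
      have "A' n j = A n j - A n n * A n j / A n n" unfolding A'_def using gg[of n j] by simp
      then show ?thesis using False by simp
    qed
    have "psdf n A'" unfolding psdf_def
    proof (intro conjI allI impI)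
      fix i j assume i: "i < n" and j: "j < n"
      have "A i j = cnj (A j i)" using i j by (intro herm) auto
      then show "A' i j = cnj (A' j i)" unfolding A'_def by simp
    next
      fix v
      define c where "c = - (\<Sum>j<n. A n j * v j) / A n n"
      define v' where "v' = v(n := c)"
      have sum0: "(\<Sum>j<Suc n. g j * v' j) = 0"
      proof -
        have "(\<Sum>j<Suc n. g j * v' j) = ((\<Sum>j<n. A n j * v j) + A n n * c) / complex_of_real s"
          unfolding g_def v'_def by (simp add: sum_divide_distrib add_divide_distrib)
        also have "\<dots> = 0" unfolding c_def using False by simp
        finally show ?thesis .
      qed
      have "0 \<le> qf (Suc n) A v'" by (rule nonneg)
      also have "\<dots> = qf (Suc n) A' v'" unfolding A'_def qf_rank1 sum0 by simp
      also have "\<dots> = qf n A' v'" unfolding qf_Suc using A'col A'row by simp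
      also have "\<dots> = qf n A' v" by (rule qf_cong) (auto simp: v'_def)
      finally show "0 \<le> qf n A' v" .
    qed
    then obtain F where F: "\<forall>i<n. \<forall>j<n. A' i j = (\<Sum>k<n. cnj (F k i) * F k j)" using Suc.IH by blast
    define F' where "F' = (\<lambda>k j. if k < n then (if j < n then F k j else 0) else g j)"
    have "\<forall>i<Suc n. \<forall>j<Suc n. A i j = (\<Sum>k<Suc n. cnj (F' k i) * F' k j)"
    proof (intro allI impI)
      fix i j assume i: "i < Suc n" and j: "j < Suc n"
      have "(\<Sum>k<Suc n. cnj (F' k i) * F' k j) = (\<Sum>k<n. cnj (F' k i) * F' k j) + cnj (g i) * g j"
        unfolding F'_def by simp
      also have "(\<Sum>k<n. cnj (F' k i) * F' k j) = A' i j"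
      proof (cases "i < n \<and> j < n")
        case True
        then show ?thesis using F unfolding F'_def by simp
      next
        case False
        then have "i = n \<or> j = n" using i j by auto
        then show ?thesis using A'row A'col i j unfolding F'_def by auto
      qed
      finally show "A i j = (\<Sum>k<Suc n. cnj (F' k i) * F' k j)" unfolding A'_def by simp
    qed
    then show ?thesis by blast
  qed
qed

abbreviation pinv :: "(nat \<Rightarrow> nat) \<Rightarrow> nat \<Rightarrow> nat" where "pinv \<sigma> \<equiv> inv_into UNIV \<sigma>"

lemma psub_finite: "perm_subgroup m G \<Longrightarrow> finite G"
proof -
  assume "perm_subgroup m G"
  then have "G \<subseteq> {p. p permutes {..<m}}" unfolding perm_subgroup_def by auto
  moreover have "finite {p. p permutes {..<m}}" by (rule finite_permutations) simp
  ultimately show "finite G" by (rule finite_subset)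
qed

lemma psub_perm: "perm_subgroup m G \<Longrightarrow> \<sigma> \<in> G \<Longrightarrow> \<sigma> permutes {..<m}"
  unfolding perm_subgroup_def by auto

lemma psub_comp: "perm_subgroup m G \<Longrightarrow> \<sigma> \<in> G \<Longrightarrow> \<tau> \<in> G \<Longrightarrow> \<sigma> \<circ> \<tau> \<in> G"
  unfolding perm_subgroup_def by auto

lemma psub_inv: "perm_subgroup m G \<Longrightarrow> \<sigma> \<in> G \<Longrightarrow> pinv \<sigma> \<in> G"
  unfolding perm_subgroup_def by auto

lemma psub_id: "perm_subgroup m G \<Longrightarrow> id \<in> G"
  unfolding perm_subgroup_def by auto

lemma psub_inv_o: "perm_subgroup m G \<Longrightarrow> \<sigma> \<in> G \<Longrightarrow> pinv \<sigma> \<circ> \<sigma> = id"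
  by (meson permutes_inv_o(2) psub_perm)

lemma psub_o_inv: "perm_subgroup m G \<Longrightarrow> \<sigma> \<in> G \<Longrightarrow> \<sigma> \<circ> pinv \<sigma> = id"
  by (meson permutes_inv_o(1) psub_perm)

lemma sum_reindex_right:
  assumes P: "perm_subgroup m G" and p: "\<pi> \<in> G"
  shows "(\<Sum>g\<in>G. f (g \<circ> \<pi>)) = (\<Sum>g\<in>G. f g)"
proof (rule sum.reindex_bij_witness[where i = "\<lambda>g. g \<circ> pinv \<pi>" and j = "\<lambda>g. g \<circ> \<pi>"])
  fix g assume g: "g \<in> G"
  show "g \<circ> \<pi> \<circ> pinv \<pi> = g" using psub_o_inv[OF P p] by (simp add: comp_assoc)
  show "g \<circ> \<pi> \<in> G" using psub_comp[OF P g p] .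
  show "f (g \<circ> \<pi>) = f (g \<circ> \<pi>)" ..
next
  fix g assume g: "g \<in> G"
  show "g \<circ> pinv \<pi> \<circ> \<pi> = g" using psub_inv_o[OF P p] by (simp add: comp_assoc)
  show "g \<circ> pinv \<pi> \<in> G" using psub_comp[OF P g psub_inv[OF P p]] .
qed

lemma inv_inv_G: "perm_subgroup m G \<Longrightarrow> \<sigma> \<in> G \<Longrightarrow> pinv (pinv \<sigma>) = \<sigma>"
  by (meson permutes_inv_inv psub_perm)

lemma sum_reindex_inv:
  assumes P: "perm_subgroup m G"
  shows "(\<Sum>g\<in>G. f (pinv g)) = (\<Sum>g\<in>G. f g)"
proof (rule sum.reindex_bij_witness[where i = "pinv" and j = "pinv"])
  fix g assume g: "g \<in> G"
  show "pinv (pinv g) = g" using inv_inv_G[OF P g] .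
  show "pinv g \<in> G" using psub_inv[OF P g] .
  show "f (pinv g) = f (pinv g)" ..
next
  fix g assume g: "g \<in> G"
  show "pinv (pinv g) = g" using inv_inv_G[OF P g] .
  show "pinv g \<in> G" using psub_inv[OF P g] .
qed

lemma sw4: "(\<Sum>a\<in>A. \<Sum>b\<in>B. \<Sum>c\<in>C. \<Sum>d\<in>D. f a b c d) = (\<Sum>c\<in>C. \<Sum>d\<in>D. \<Sum>a\<in>A. \<Sum>b\<in>B. f a b c d)"
proof -
  have "(\<Sum>a\<in>A. \<Sum>b\<in>B. \<Sum>c\<in>C. \<Sum>d\<in>D. f a b c d) = (\<Sum>a\<in>A. \<Sum>c\<in>C. \<Sum>b\<in>B. \<Sum>d\<in>D. f a b c d)"
    by (rule sum.cong[OF refl], rule sum.swap)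
  also have "\<dots> = (\<Sum>a\<in>A. \<Sum>c\<in>C. \<Sum>d\<in>D. \<Sum>b\<in>B. f a b c d)"
    by (rule sum.cong[OF refl], rule sum.cong[OF refl], rule sum.swap)
  also have "\<dots> = (\<Sum>c\<in>C. \<Sum>a\<in>A. \<Sum>d\<in>D. \<Sum>b\<in>B. f a b c d)"
    by (rule sum.swap)
  also have "\<dots> = (\<Sum>c\<in>C. \<Sum>d\<in>D. \<Sum>a\<in>A. \<Sum>b\<in>B. f a b c d)"
    by (rule sum.cong[OF refl], rule sum.swap)
  finally show ?thesis .
qed




lemma cnj_self_nonneg: "0 \<le> cnj (z::complex) * z"
  by (simp add: less_eq_complex_def)

lemma rep_carrier: "is_rep G n \<rho> \<Longrightarrow> \<sigma> \<in> G \<Longrightarrow> \<rho> \<sigma> \<in> carrier_mat n n"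
  unfolding is_rep_def by auto

lemma rep_mult:
  assumes R: "is_rep G n \<rho>" and s: "\<sigma> \<in> G" and t: "\<tau> \<in> G" and i: "i < n" and j: "j < n"
  shows "\<rho> (\<sigma> \<circ> \<tau>) $$ (i,j) = (\<Sum>k<n. \<rho> \<sigma> $$ (i,k) * \<rho> \<tau> $$ (k,j))"
proof -
  have e: "\<rho> (\<sigma> \<circ> \<tau>) = \<rho> \<sigma> * \<rho> \<tau>" using R s t unfolding is_rep_def by auto
  have c1: "\<rho> \<sigma> \<in> carrier_mat n n" and c2: "\<rho> \<tau> \<in> carrier_mat n n" using rep_carrier[OF R] s t by auto
  show ?thesis unfolding e using c1 c2 i j
    by (auto simp: index_mult_mat scalar_prod_def atLeast0LessThan intro!: sum.cong)
qed

lemma rep_id: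
  assumes R: "is_rep G n \<rho>" and i: "i < n" and j: "j < n"
  shows "\<rho> id $$ (i,j) = (if i = j then 1 else 0)"
proof -
  have e: "\<rho> id = 1\<^sub>m n" using R unfolding is_rep_def by auto
  show ?thesis unfolding e using i j by simp
qed

definition hh :: "(nat \<Rightarrow> nat) set \<Rightarrow> nat \<Rightarrow> ((nat \<Rightarrow> nat) \<Rightarrow> complex mat) \<Rightarrow> nat \<Rightarrow> nat \<Rightarrow> complex" where
  "hh G n \<rho> a b = (\<Sum>g\<in>G. \<Sum>k<n. cnj (\<rho> g $$ (k,a)) * \<rho> g $$ (k,b))"

lemma hh_herm: "hh G n \<rho> a b = cnj (hh G n \<rho> b a)"
  unfolding hh_def by (simp add: mult.commute)

lemma hh_invariant:
  assumes P: "perm_subgroup m G" and R: "is_rep G n \<rho>" and p: "\<pi> \<in> G" and i: "i < n" and j: "j < n"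
  shows "(\<Sum>a<n. \<Sum>b<n. cnj (\<rho> \<pi> $$ (a,i)) * hh G n \<rho> a b * \<rho> \<pi> $$ (b,j)) = hh G n \<rho> i j"
proof -
  have "(\<Sum>a<n. \<Sum>b<n. cnj (\<rho> \<pi> $$ (a,i)) * hh G n \<rho> a b * \<rho> \<pi> $$ (b,j))
    = (\<Sum>g\<in>G. \<Sum>k<n. cnj (\<Sum>a<n. \<rho> g $$ (k,a) * \<rho> \<pi> $$ (a,i)) * (\<Sum>b<n. \<rho> g $$ (k,b) * \<rho> \<pi> $$ (b,j)))"
    unfolding hh_def
    apply (simp add: sum_distrib_left sum_distrib_right sum_product mult_ac)
    apply (rule sw4)
    done
  also have "\<dots> = (\<Sum>g\<in>G. \<Sum>k<n. cnj (\<rho> (g \<circ> \<pi>) $$ (k,i)) * \<rho> (g \<circ> \<pi>) $$ (k,j))"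
    by (intro sum.cong refl) (simp add: rep_mult[OF R _ p _ i] rep_mult[OF R _ p _ j])
  also have "\<dots> = hh G n \<rho> i j"
    unfolding hh_def by (rule sum_reindex_right[OF P p, where f = "\<lambda>g. \<Sum>k<n. cnj (\<rho> g $$ (k,i)) * \<rho> g $$ (k,j)"])
  finally show ?thesis .
qed

lemma hh_qf:
  "qf n (hh G n \<rho>) v = (\<Sum>g\<in>G. \<Sum>k<n. cnj (\<Sum>j<n. \<rho> g $$ (k,j) * v j) * (\<Sum>j<n. \<rho> g $$ (k,j) * v j))"
  unfolding qf_def hh_def
  apply (simp add: sum_distrib_left sum_distrib_right sum_product mult_ac)
  apply (rule sw4)
  done

lemma hh_ge:
  assumes P: "perm_subgroup m G" and R: "is_rep G n \<rho>"
  shows "(\<Sum>k<n. cnj (v k) * v k) \<le> qf n (hh G n \<rho>) v"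
proof -
  have fin: "finite G" by (rule psub_finite[OF P])
  have idG: "id \<in> G" by (rule psub_id[OF P])
  have nn: "0 \<le> (\<Sum>k<n. cnj (\<Sum>j<n. \<rho> g $$ (k,j) * v j) * (\<Sum>j<n. \<rho> g $$ (k,j) * v j))" for g
    by (intro sum_nonneg) (rule cnj_self_nonneg)
  have "(\<Sum>j<n. \<rho> id $$ (k,j) * v j) = v k" if "k < n" for k
  proof -
    have "(\<Sum>j<n. \<rho> id $$ (k,j) * v j) = (\<Sum>j<n. if k = j then v j else 0)"
      by (rule sum.cong) (auto simp: rep_id[OF R that])
    also have "\<dots> = v k" using that by simp
    finally show ?thesis .
  qed
  then have "(\<Sum>k<n. cnj (v k) * v k) = (\<Sum>k<n. cnj (\<Sum>j<n. \<rho> id $$ (k,j) * v j) * (\<Sum>j<n. \<rho> id $$ (k,j) * v j))"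
    by (intro sum.cong) auto
  also have "\<dots> \<le> qf n (hh G n \<rho>) v" unfolding hh_qf
    by (rule member_le_sum[OF idG _ fin, of "\<lambda>g. \<Sum>k<n. cnj (\<Sum>j<n. \<rho> g $$ (k,j) * v j) * (\<Sum>j<n. \<rho> g $$ (k,j) * v j)"]) (use nn in auto)
  finally show ?thesis .
qed


lemma hh_inverse:
  assumes P: "perm_subgroup m G" and R: "is_rep G n \<rho>"
  shows "\<exists>K. (\<forall>a<n. \<forall>c<n. (\<Sum>b<n. K a b * hh G n \<rho> b c) = (if a = c then 1 else 0))
           \<and> (\<forall>a<n. \<forall>c<n. (\<Sum>b<n. hh G n \<rho> a b * K b c) = (if a = c then 1 else 0))"
proof -
  define Hm where "Hm = mat n n (\<lambda>(a,b). hh G n \<rho> a b)"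
  have Hc: "Hm \<in> carrier_mat n n" unfolding Hm_def by simp
  have dH: "det Hm \<noteq> 0"
  proof
    assume "det Hm = 0"
    then obtain v where v: "v \<in> carrier_vec n" and v0: "v \<noteq> 0\<^sub>v n" and Hv: "Hm *\<^sub>v v = 0\<^sub>v n"
      using det_0_iff_vec_prod_zero_field[OF Hc] by auto
    have hv: "(\<Sum>j<n. hh G n \<rho> i j * v $ j) = 0" if i: "i < n" for i
    proof -
      have "0 = (Hm *\<^sub>v v) $ i" using Hv i by simp
      also have "\<dots> = (\<Sum>j<n. hh G n \<rho> i j * v $ j)" using v i Hc unfolding Hm_def
        by (auto simp: scalar_prod_def atLeast0LessThan intro!: sum.cong)
      finally show ?thesis by simp
    qed
    have "qf n (hh G n \<rho>) (\<lambda>i. v $ i) = (\<Sum>i<n. cnj (v $ i) * (\<Sum>j<n. hh G n \<rho> i j * v $ j))"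
      unfolding qf_def by (simp add: sum_distrib_left mult.assoc)
    also have "\<dots> = 0" using hv by simp
    finally have "(\<Sum>k<n. cnj (v $ k) * v $ k) \<le> 0" using hh_ge[OF P R, of "\<lambda>i. v $ i"] by simp
    moreover have "0 \<le> (\<Sum>k<n. cnj (v $ k) * v $ k)" by (intro sum_nonneg) (rule cnj_self_nonneg)
    ultimately have "(\<Sum>k<n. cnj (v $ k) * v $ k) = 0" by simp
    then have "\<forall>k\<in>{..<n}. cnj (v $ k) * v $ k = 0"
      by (subst (asm) sum_nonneg_eq_0_iff) (auto intro: cnj_self_nonneg)
    then have "v = 0\<^sub>v n" using v by (intro eq_vecI) auto
    with v0 show False by simp
  qed
  from det_non_zero_imp_unit[OF Hc dH, of undefined]
  obtain Km where Km: "Km \<in> carrier_mat n n" and KH: "Km * Hm = 1\<^sub>m n" and HK: "Hm * Km = 1\<^sub>m n"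
    unfolding Units_def ring_mat_def by auto
  define K where "K = (\<lambda>a b. Km $$ (a,b))"
  have 1: "(\<Sum>b<n. K a b * hh G n \<rho> b c) = (if a = c then 1 else 0)" if a: "a < n" and c: "c < n" for a c
  proof -
    have "(if a = c then 1 else 0) = (Km * Hm) $$ (a,c)" using a c KH by simp
    also have "\<dots> = (\<Sum>b<n. K a b * hh G n \<rho> b c)" using Km Hc a c unfolding K_def Hm_def
      by (auto simp: scalar_prod_def atLeast0LessThan intro!: sum.cong)
    finally show ?thesis by simp
  qed
  have 2: "(\<Sum>b<n. hh G n \<rho> a b * K b c) = (if a = c then 1 else 0)" if a: "a < n" and c: "c < n" for a c
  proof -
    have "(if a = c then 1 else 0) = (Hm * Km) $$ (a,c)" using a c HK by simp
    also have "\<dots> = (\<Sum>b<n. hh G n \<rho> a b * K b c)" using Km Hc a c unfolding K_def Hm_def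
      by (auto simp: scalar_prod_def atLeast0LessThan intro!: sum.cong)
    finally show ?thesis by simp
  qed
  from 1 2 show ?thesis by blast
qed


lemma sw3: "(\<Sum>a\<in>A. \<Sum>b\<in>B. \<Sum>c\<in>C. f a b c) = (\<Sum>b\<in>B. \<Sum>c\<in>C. \<Sum>a\<in>A. f a b c)"
proof -
  have "(\<Sum>a\<in>A. \<Sum>b\<in>B. \<Sum>c\<in>C. f a b c) = (\<Sum>b\<in>B. \<Sum>a\<in>A. \<Sum>c\<in>C. f a b c)"
    by (rule sum.swap)
  also have "\<dots> = (\<Sum>b\<in>B. \<Sum>c\<in>C. \<Sum>a\<in>A. f a b c)"
    by (rule sum.cong[OF refl], rule sum.swap)
  finally show ?thesis .
qed

lemma sw6: "(\<Sum>a\<in>A. \<Sum>b\<in>B. \<Sum>c\<in>C. \<Sum>d\<in>D. \<Sum>e\<in>E. \<Sum>f\<in>F. h a b c d e f)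
  = (\<Sum>c\<in>C. \<Sum>d\<in>D. \<Sum>e\<in>E. \<Sum>f\<in>F. \<Sum>b\<in>B. \<Sum>a\<in>A. h a b c d e f)"
proof -
  have "(\<Sum>a\<in>A. \<Sum>b\<in>B. \<Sum>c\<in>C. \<Sum>d\<in>D. \<Sum>e\<in>E. \<Sum>f\<in>F. h a b c d e f)
     = (\<Sum>c\<in>C. \<Sum>d\<in>D. \<Sum>a\<in>A. \<Sum>b\<in>B. \<Sum>e\<in>E. \<Sum>f\<in>F. h a b c d e f)"
    by (rule sw4)
  also have "\<dots> = (\<Sum>c\<in>C. \<Sum>d\<in>D. \<Sum>e\<in>E. \<Sum>f\<in>F. \<Sum>a\<in>A. \<Sum>b\<in>B. h a b c d e f)"
    by (intro sum.cong refl sw4)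
  also have "\<dots> = (\<Sum>c\<in>C. \<Sum>d\<in>D. \<Sum>e\<in>E. \<Sum>f\<in>F. \<Sum>b\<in>B. \<Sum>a\<in>A. h a b c d e f)"
    by (intro sum.cong refl sum.swap)
  finally show ?thesis .
qed

lemma hh_cnj: "cnj (hh G n \<rho> a b) = hh G n \<rho> b a"
  by (subst hh_herm) simp

lemma K_psd:
  assumes P: "perm_subgroup m G" and R: "is_rep G n \<rho>"
    and HK: "\<forall>a<n. \<forall>c<n. (\<Sum>b<n. hh G n \<rho> a b * K b c) = (if a = c then 1 else 0)"
  shows "0 \<le> qf n K z"
proof -
  define w where "w = (\<lambda>a. \<Sum>i<n. K a i * z i)"
  have zl: "z l = (\<Sum>b<n. hh G n \<rho> l b * w b)" if l: "l < n" for l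
  proof -
    have "(\<Sum>b<n. hh G n \<rho> l b * w b) = (\<Sum>b<n. \<Sum>i<n. hh G n \<rho> l b * K b i * z i)"
      unfolding w_def by (simp add: sum_distrib_left mult.assoc)
    also have "\<dots> = (\<Sum>i<n. \<Sum>b<n. hh G n \<rho> l b * K b i * z i)" by (rule sum.swap)
    also have "\<dots> = (\<Sum>i<n. (\<Sum>b<n. hh G n \<rho> l b * K b i) * z i)" by (simp add: sum_distrib_right)
    also have "\<dots> = (\<Sum>i<n. (if l = i then z i else 0))"
      by (rule sum.cong) (use HK l in auto)
    also have "\<dots> = z l" using l by simp
    finally show ?thesis by simp
  qed
  have "qf n K z = (\<Sum>l<n. cnj (z l) * w l)"
    unfolding qf_def w_def by (simp add: sum_distrib_left mult.assoc)
  also have "\<dots> = (\<Sum>l<n. cnj (\<Sum>b<n. hh G n \<rho> l b * w b) * w l)"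
    by (rule sum.cong) (use zl in auto)
  also have "\<dots> = (\<Sum>l<n. \<Sum>b<n. cnj (w b) * hh G n \<rho> b l * w l)"
    by (simp add: sum_distrib_left sum_distrib_right hh_cnj mult_ac)
  also have "\<dots> = (\<Sum>b<n. \<Sum>l<n. cnj (w b) * hh G n \<rho> b l * w l)" by (rule sum.swap)
  also have "\<dots> = qf n (hh G n \<rho>) w" unfolding qf_def ..
  finally have e: "qf n K z = qf n (hh G n \<rho>) w" .
  have "0 \<le> (\<Sum>k<n. cnj (w k) * w k)" by (intro sum_nonneg) (rule cnj_self_nonneg)
  also have "\<dots> \<le> qf n (hh G n \<rho>) w" by (rule hh_ge[OF P R])
  finally show ?thesis using e by simp
qed


lemma rho_inv_formula:
  assumes P: "perm_subgroup m G" and R: "is_rep G n \<rho>"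
    and KH: "\<forall>a<n. \<forall>c<n. (\<Sum>b<n. K a b * hh G n \<rho> b c) = (if a = c then 1 else 0)"
    and p: "\<pi> \<in> G" and c: "c < n" and l: "l < n"
  shows "\<rho> (pinv \<pi>) $$ (c,l) = (\<Sum>i<n. K c i * (\<Sum>a<n. cnj (\<rho> \<pi> $$ (a,i)) * hh G n \<rho> a l))"
proof -
  have p': "pinv \<pi> \<in> G" by (rule psub_inv[OF P p])
  have delta: "(\<Sum>j<n. \<rho> \<pi> $$ (b,j) * \<rho> (pinv \<pi>) $$ (j,l)) = (if b = l then 1 else 0)" if b: "b < n" for b
  proof -
    have "(\<Sum>j<n. \<rho> \<pi> $$ (b,j) * \<rho> (pinv \<pi>) $$ (j,l)) = \<rho> (\<pi> \<circ> pinv \<pi>) $$ (b,l)"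
      by (rule rep_mult[OF R p p' b l, symmetric])
    also have "\<dots> = (if b = l then 1 else 0)" using psub_o_inv[OF P p] rep_id[OF R b l] by simp
    finally show ?thesis .
  qed
  have step1: "(\<Sum>j<n. hh G n \<rho> i j * \<rho> (pinv \<pi>) $$ (j,l)) = (\<Sum>a<n. cnj (\<rho> \<pi> $$ (a,i)) * hh G n \<rho> a l)"
    if i: "i < n" for i
  proof -
    have "(\<Sum>j<n. hh G n \<rho> i j * \<rho> (pinv \<pi>) $$ (j,l))
       = (\<Sum>j<n. (\<Sum>a<n. \<Sum>b<n. cnj (\<rho> \<pi> $$ (a,i)) * hh G n \<rho> a b * \<rho> \<pi> $$ (b,j)) * \<rho> (pinv \<pi>) $$ (j,l))"
      by (rule sum.cong[OF refl]) (simp add: hh_invariant[OF P R p i])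
    also have "\<dots> = (\<Sum>j<n. \<Sum>a<n. \<Sum>b<n. cnj (\<rho> \<pi> $$ (a,i)) * hh G n \<rho> a b * (\<rho> \<pi> $$ (b,j) * \<rho> (pinv \<pi>) $$ (j,l)))"
      by (simp add: sum_distrib_right mult.assoc)
    also have "\<dots> = (\<Sum>a<n. \<Sum>b<n. \<Sum>j<n. cnj (\<rho> \<pi> $$ (a,i)) * hh G n \<rho> a b * (\<rho> \<pi> $$ (b,j) * \<rho> (pinv \<pi>) $$ (j,l)))"
      by (rule sw3)
    also have "\<dots> = (\<Sum>a<n. \<Sum>b<n. cnj (\<rho> \<pi> $$ (a,i)) * hh G n \<rho> a b * (\<Sum>j<n. \<rho> \<pi> $$ (b,j) * \<rho> (pinv \<pi>) $$ (j,l)))"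
      by (simp add: sum_distrib_left)
    also have "\<dots> = (\<Sum>a<n. \<Sum>b<n. (if b = l then cnj (\<rho> \<pi> $$ (a,i)) * hh G n \<rho> a b else 0))"
      by (intro sum.cong refl) (simp add: delta)
    also have "\<dots> = (\<Sum>a<n. cnj (\<rho> \<pi> $$ (a,i)) * hh G n \<rho> a l)" using l by simp
    finally show ?thesis .
  qed
  have "\<rho> (pinv \<pi>) $$ (c,l) = (\<Sum>j<n. (if c = j then \<rho> (pinv \<pi>) $$ (j,l) else 0))"
    using c by simp
  also have "\<dots> = (\<Sum>j<n. (\<Sum>i<n. K c i * hh G n \<rho> i j) * \<rho> (pinv \<pi>) $$ (j,l))"
    by (rule sum.cong[OF refl]) (use KH c in auto)
  also have "\<dots> = (\<Sum>j<n. \<Sum>i<n. K c i * (hh G n \<rho> i j * \<rho> (pinv \<pi>) $$ (j,l)))"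
    by (simp add: sum_distrib_right mult.assoc)
  also have "\<dots> = (\<Sum>i<n. \<Sum>j<n. K c i * (hh G n \<rho> i j * \<rho> (pinv \<pi>) $$ (j,l)))"
    by (rule sum.swap)
  also have "\<dots> = (\<Sum>i<n. K c i * (\<Sum>j<n. hh G n \<rho> i j * \<rho> (pinv \<pi>) $$ (j,l)))"
    by (simp add: sum_distrib_left)
  also have "\<dots> = (\<Sum>i<n. K c i * (\<Sum>a<n. cnj (\<rho> \<pi> $$ (a,i)) * hh G n \<rho> a l))"
    by (rule sum.cong[OF refl]) (simp add: step1)
  finally show ?thesis .
qed


definition YY :: "((nat \<Rightarrow> nat) \<Rightarrow> complex mat) \<Rightarrow> nat \<Rightarrow> (nat \<Rightarrow> nat) \<Rightarrow> (nat \<Rightarrow> nat) \<Rightarrow> nat \<Rightarrow> nat \<Rightarrow> complex" where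
  "YY \<rho> n \<tau> g k l = (\<Sum>c<n. \<rho> g $$ (k,c) * \<rho> \<tau> $$ (c,l))"

lemma trace_formula:
  assumes P: "perm_subgroup m G" and R: "is_rep G n \<rho>"
    and KH: "\<forall>a<n. \<forall>c<n. (\<Sum>b<n. K a b * hh G n \<rho> b c) = (if a = c then 1 else 0)"
    and p: "\<pi> \<in> G" and t: "\<tau> \<in> G"
  shows "mat_trace (\<rho> (\<tau> \<circ> pinv \<pi>)) = (\<Sum>g\<in>G. \<Sum>k<n. \<Sum>l<n. \<Sum>i<n. YY \<rho> n \<tau> g k l * K l i * cnj (YY \<rho> n \<pi> g k i))"
proof -
  have p': "pinv \<pi> \<in> G" by (rule psub_inv[OF P p])
  have tp: "\<tau> \<circ> pinv \<pi> \<in> G" by (rule psub_comp[OF P t p'])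
  have "mat_trace (\<rho> (\<tau> \<circ> pinv \<pi>)) = (\<Sum>c<n. \<rho> (\<tau> \<circ> pinv \<pi>) $$ (c,c))"
    unfolding mat_trace_def using rep_carrier[OF R tp] by simp
  also have "\<dots> = (\<Sum>c<n. \<Sum>l<n. \<rho> \<tau> $$ (c,l) * \<rho> (pinv \<pi>) $$ (l,c))"
    by (rule sum.cong[OF refl]) (simp add: rep_mult[OF R t p'])
  also have "\<dots> = (\<Sum>c<n. \<Sum>l<n. \<rho> \<tau> $$ (c,l) * (\<Sum>i<n. K l i * (\<Sum>a<n. cnj (\<rho> \<pi> $$ (a,i)) * hh G n \<rho> a c)))"
    by (intro sum.cong refl) (simp add: rho_inv_formula[OF P R KH p])
  also have "\<dots> = (\<Sum>c<n. \<Sum>l<n. \<Sum>i<n. \<rho> \<tau> $$ (c,l) * K l i * (\<Sum>a<n. cnj (\<rho> \<pi> $$ (a,i)) * hh G n \<rho> a c))"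
    by (simp add: sum_distrib_left mult.assoc)
  also have "\<dots> = (\<Sum>l<n. \<Sum>i<n. \<Sum>c<n. \<rho> \<tau> $$ (c,l) * K l i * (\<Sum>a<n. cnj (\<rho> \<pi> $$ (a,i)) * hh G n \<rho> a c))"
    by (rule sw3)
  also have "\<dots> = (\<Sum>l<n. \<Sum>i<n. \<Sum>g\<in>G. \<Sum>k<n. YY \<rho> n \<tau> g k l * K l i * cnj (YY \<rho> n \<pi> g k i))"
  proof (intro sum.cong refl)
    fix l i
    show "(\<Sum>c<n. \<rho> \<tau> $$ (c,l) * K l i * (\<Sum>a<n. cnj (\<rho> \<pi> $$ (a,i)) * hh G n \<rho> a c))
      = (\<Sum>g\<in>G. \<Sum>k<n. YY \<rho> n \<tau> g k l * K l i * cnj (YY \<rho> n \<pi> g k i))"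
      unfolding YY_def hh_def
      apply (simp add: sum_distrib_left sum_distrib_right mult_ac)
      apply (rule sw4)
      done
  qed
  also have "\<dots> = (\<Sum>g\<in>G. \<Sum>k<n. \<Sum>l<n. \<Sum>i<n. YY \<rho> n \<tau> g k l * K l i * cnj (YY \<rho> n \<pi> g k i))"
    by (rule sw4)
  finally show ?thesis .
qed

lemma char_pd:
  assumes P: "perm_subgroup m G" and R: "is_rep G n \<rho>"
    and chi: "\<forall>\<sigma>\<in>G. \<chi> \<sigma> = mat_trace (\<rho> \<sigma>)"
  shows "0 \<le> (\<Sum>\<pi>\<in>G. \<Sum>\<tau>\<in>G. cnj (\<alpha> \<pi>) * \<alpha> \<tau> * \<chi> (\<tau> \<circ> pinv \<pi>))"
proof -
  obtain K where KH: "\<forall>a<n. \<forall>c<n. (\<Sum>b<n. K a b * hh G n \<rho> b c) = (if a = c then 1 else 0)"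
    and HK: "\<forall>a<n. \<forall>c<n. (\<Sum>b<n. hh G n \<rho> a b * K b c) = (if a = c then 1 else 0)"
    using hh_inverse[OF P R] by blast
  have "(\<Sum>\<pi>\<in>G. \<Sum>\<tau>\<in>G. cnj (\<alpha> \<pi>) * \<alpha> \<tau> * \<chi> (\<tau> \<circ> pinv \<pi>))
    = (\<Sum>\<pi>\<in>G. \<Sum>\<tau>\<in>G. cnj (\<alpha> \<pi>) * \<alpha> \<tau> *
         (\<Sum>g\<in>G. \<Sum>k<n. \<Sum>l<n. \<Sum>i<n. YY \<rho> n \<tau> g k l * K l i * cnj (YY \<rho> n \<pi> g k i)))"
  proof (intro sum.cong refl)
    fix \<pi> \<tau> assume p: "\<pi> \<in> G" and t: "\<tau> \<in> G"
    have "\<tau> \<circ> pinv \<pi> \<in> G" by (rule psub_comp[OF P t psub_inv[OF P p]])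
    then have "\<chi> (\<tau> \<circ> pinv \<pi>) = mat_trace (\<rho> (\<tau> \<circ> pinv \<pi>))" using chi by blast
    then show "cnj (\<alpha> \<pi>) * \<alpha> \<tau> * \<chi> (\<tau> \<circ> pinv \<pi>) = cnj (\<alpha> \<pi>) * \<alpha> \<tau> *
         (\<Sum>g\<in>G. \<Sum>k<n. \<Sum>l<n. \<Sum>i<n. YY \<rho> n \<tau> g k l * K l i * cnj (YY \<rho> n \<pi> g k i))"
      by (simp add: trace_formula[OF P R KH p t])
  qed
  also have "\<dots> = (\<Sum>g\<in>G. \<Sum>k<n. qf n K (\<lambda>i. cnj (\<Sum>\<pi>\<in>G. \<alpha> \<pi> * YY \<rho> n \<pi> g k i)))"
    unfolding qf_def
    apply (simp add: sum_distrib_left sum_distrib_right mult_ac)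
    apply (rule sw6)
    done
  also have "0 \<le> \<dots>"
    by (intro sum_nonneg K_psd[OF P R HK])
  finally show ?thesis by simp
qed




lemma PiE_comp_perm:
  assumes p: "\<pi> permutes {..<m}" and w: "w \<in> PiE {..<m} (\<lambda>_. X)"
  shows "w \<circ> \<pi> \<in> PiE {..<m} (\<lambda>_. X)"
proof -
  have "w (\<pi> t) \<in> X" if "t < m" for t using w permutes_in_image[OF p] that by auto
  moreover have "w (\<pi> t) = undefined" if "t \<notin> {..<m}" for t
    using w p that unfolding permutes_def by auto
  ultimately show ?thesis by (auto simp: PiE_def extensional_def)
qed

lemma sum_PiE_perm:
  assumes p: "\<pi> permutes {..<m}"
  shows "(\<Sum>w\<in>PiE {..<m} (\<lambda>_. X). f (w \<circ> \<pi>)) = (\<Sum>w\<in>PiE {..<m} (\<lambda>_. X). f w)"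
proof (rule sum.reindex_bij_witness[where i = "\<lambda>w. w \<circ> inv_into UNIV \<pi>" and j = "\<lambda>w. w \<circ> \<pi>"])
  have pi': "inv_into UNIV \<pi> permutes {..<m}" using permutes_inv[OF p] .
  fix w assume w: "w \<in> PiE {..<m} (\<lambda>_. X)"
  show "w \<circ> \<pi> \<circ> inv_into UNIV \<pi> = w" using permutes_inv_o(1)[OF p] by (simp add: comp_assoc)
  show "w \<circ> \<pi> \<in> PiE {..<m} (\<lambda>_. X)" by (rule PiE_comp_perm[OF p w])
  show "f (w \<circ> \<pi>) = f (w \<circ> \<pi>)" ..
next
  have pi': "inv_into UNIV \<pi> permutes {..<m}" using permutes_inv[OF p] .
  fix w assume w: "w \<in> PiE {..<m} (\<lambda>_. X)"
  show "w \<circ> inv_into UNIV \<pi> \<circ> \<pi> = w" using permutes_inv_o(2)[OF p] by (simp add: comp_assoc)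
  show "w \<circ> inv_into UNIV \<pi> \<in> PiE {..<m} (\<lambda>_. X)" by (rule PiE_comp_perm[OF pi' w])
qed

lemma prod_perm_shift:
  assumes p: "\<pi> permutes {..<m}"
  shows "(\<Prod>s<m. h (\<pi> s) (\<rho> s)) = (\<Prod>s<m. h s (\<rho> (inv_into UNIV \<pi> s)))"
proof -
  have "(\<Prod>s<m. h s (\<rho> (inv_into UNIV \<pi> s))) = (\<Prod>s<m. ((\<lambda>s. h s (\<rho> (inv_into UNIV \<pi> s))) \<circ> \<pi>) s)"
    using prod.permute[OF p, of "\<lambda>s. h s (\<rho> (inv_into UNIV \<pi> s))"] by simp
  also have "\<dots> = (\<Prod>s<m. h (\<pi> s) (\<rho> s))"
    using permutes_inverses(2)[OF p] by simp
  finally show ?thesis by simp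
qed

lemma pd_inner:
  assumes P: "perm_subgroup m G" and R: "is_rep G n \<rho>"
    and chi: "\<forall>\<sigma>\<in>G. \<chi> \<sigma> = mat_trace (\<rho> \<sigma>)"
  shows "0 \<le> (\<Sum>\<pi>\<in>G. \<Sum>\<sigma>\<in>G. \<chi> \<sigma> * (cnj (\<beta> (pinv \<pi>)) * \<beta> (\<sigma> \<circ> pinv \<pi>)))"
proof -
  have "(\<Sum>\<pi>\<in>G. \<Sum>\<sigma>\<in>G. \<chi> \<sigma> * (cnj (\<beta> (pinv \<pi>)) * \<beta> (\<sigma> \<circ> pinv \<pi>)))
      = (\<Sum>\<pi>\<in>G. \<Sum>\<sigma>\<in>G. \<chi> \<sigma> * (cnj (\<beta> \<pi>) * \<beta> (\<sigma> \<circ> \<pi>)))"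
    by (rule sum_reindex_inv[OF P, where f = "\<lambda>\<pi>. \<Sum>\<sigma>\<in>G. \<chi> \<sigma> * (cnj (\<beta> \<pi>) * \<beta> (\<sigma> \<circ> \<pi>))"])
  also have "\<dots> = (\<Sum>\<pi>\<in>G. \<Sum>\<tau>\<in>G. cnj (\<beta> \<pi>) * \<beta> \<tau> * \<chi> (\<tau> \<circ> pinv \<pi>))"
  proof (rule sum.cong[OF refl])
    fix \<pi> assume p: "\<pi> \<in> G"
    have "(\<Sum>\<sigma>\<in>G. \<chi> \<sigma> * (cnj (\<beta> \<pi>) * \<beta> (\<sigma> \<circ> \<pi>))) = (\<Sum>\<sigma>\<in>G. (\<lambda>\<tau>. cnj (\<beta> \<pi>) * \<beta> \<tau> * \<chi> (\<tau> \<circ> pinv \<pi>)) (\<sigma> \<circ> \<pi>))"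
      using psub_o_inv[OF P p] by (simp add: comp_assoc mult_ac)
    also have "\<dots> = (\<Sum>\<tau>\<in>G. cnj (\<beta> \<pi>) * \<beta> \<tau> * \<chi> (\<tau> \<circ> pinv \<pi>))"
      by (rule sum_reindex_right[OF P p])
    finally show "(\<Sum>\<sigma>\<in>G. \<chi> \<sigma> * (cnj (\<beta> \<pi>) * \<beta> (\<sigma> \<circ> \<pi>))) = (\<Sum>\<tau>\<in>G. cnj (\<beta> \<pi>) * \<beta> \<tau> * \<chi> (\<tau> \<circ> pinv \<pi>))" .
  qed
  also have "0 \<le> \<dots>" by (rule char_pd[OF P R chi])
  finally show ?thesis .
qed


definition bet :: "(nat \<Rightarrow> nat \<Rightarrow> nat \<Rightarrow> complex) \<Rightarrow> nat \<Rightarrow> (nat \<Rightarrow> nat) \<Rightarrow> (nat \<Rightarrow> nat) \<Rightarrow> (nat \<Rightarrow> nat) \<Rightarrow> complex" where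
  "bet FF m w \<kappa> r = (\<Prod>s<m. FF (w s) (\<kappa> s) (r s))"

lemma core:
  fixes FF AA :: "nat \<Rightarrow> nat \<Rightarrow> nat \<Rightarrow> complex" and I :: "nat set" and c :: "(nat \<Rightarrow> nat) \<Rightarrow> complex"
  assumes P: "perm_subgroup m G" and R: "is_rep G n \<rho>"
    and chi: "\<forall>\<sigma>\<in>G. \<chi> \<sigma> = mat_trace (\<rho> \<sigma>)"
    and cnn: "\<forall>w\<in>PiE {..<m} (\<lambda>_. I). 0 \<le> c w"
    and cinv: "\<forall>\<pi>\<in>G. \<forall>w\<in>PiE {..<m} (\<lambda>_. I). c (w \<circ> \<pi>) = c w"
    and gram: "\<forall>i\<in>I. \<forall>a<m. \<forall>b<m. AA i a b = (\<Sum>k<m. cnj (FF i k a) * FF i k b)"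
  shows "0 \<le> (\<Sum>\<sigma>\<in>G. \<Sum>w\<in>PiE {..<m} (\<lambda>_. I). \<chi> \<sigma> * (c w * (\<Prod>t<m. AA (w t) t (\<sigma> t))))"
proof -
  let ?W = "PiE {..<m} (\<lambda>_. I)"
  let ?K = "PiE {..<m} (\<lambda>_. {..<m})"
  define \<Phi> where "\<Phi> = (\<lambda>w \<kappa>. \<Sum>\<sigma>\<in>G. \<chi> \<sigma> * (cnj (bet FF m w \<kappa> id) * bet FF m w \<kappa> \<sigma>))"
  have fin: "finite G" by (rule psub_finite[OF P])
  have expand: "(\<Prod>t<m. AA (w t) t (\<sigma> t)) = (\<Sum>\<kappa>\<in>?K. cnj (bet FF m w \<kappa> id) * bet FF m w \<kappa> \<sigma>)"
    if w: "w \<in> ?W" and s: "\<sigma> \<in> G" for w \<sigma>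
  proof -
    have sp: "\<sigma> permutes {..<m}" by (rule psub_perm[OF P s])
    have "(\<Prod>t<m. AA (w t) t (\<sigma> t)) = (\<Prod>t<m. \<Sum>k<m. cnj (FF (w t) k t) * FF (w t) k (\<sigma> t))"
    proof (rule prod.cong[OF refl])
      fix t assume t: "t \<in> {..<m}"
      then have "w t \<in> I" "\<sigma> t < m" using w permutes_in_image[OF sp] by auto
      then show "AA (w t) t (\<sigma> t) = (\<Sum>k<m. cnj (FF (w t) k t) * FF (w t) k (\<sigma> t))"
        using gram t by auto
    qed
    also have "\<dots> = (\<Sum>\<kappa>\<in>?K. \<Prod>t<m. cnj (FF (w t) (\<kappa> t) t) * FF (w t) (\<kappa> t) (\<sigma> t))"
      by (rule prod_sum_PiE) auto
    also have "\<dots> = (\<Sum>\<kappa>\<in>?K. cnj (bet FF m w \<kappa> id) * bet FF m w \<kappa> \<sigma>)"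
      unfolding bet_def by (simp add: prod.distrib)
    finally show ?thesis .
  qed
  define S where "S = (\<Sum>\<sigma>\<in>G. \<Sum>w\<in>?W. \<chi> \<sigma> * (c w * (\<Prod>t<m. AA (w t) t (\<sigma> t))))"
  have S1: "S = (\<Sum>w\<in>?W. \<Sum>\<kappa>\<in>?K. c w * \<Phi> w \<kappa>)"
  proof -
    have "S = (\<Sum>\<sigma>\<in>G. \<Sum>w\<in>?W. \<Sum>\<kappa>\<in>?K. c w * (\<chi> \<sigma> * (cnj (bet FF m w \<kappa> id) * bet FF m w \<kappa> \<sigma>)))"
      unfolding S_def
      by (intro sum.cong refl) (simp add: expand sum_distrib_left mult_ac)
    also have "\<dots> = (\<Sum>w\<in>?W. \<Sum>\<kappa>\<in>?K. \<Sum>\<sigma>\<in>G. c w * (\<chi> \<sigma> * (cnj (bet FF m w \<kappa> id) * bet FF m w \<kappa> \<sigma>)))"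
      by (rule sw3)
    also have "\<dots> = (\<Sum>w\<in>?W. \<Sum>\<kappa>\<in>?K. c w * \<Phi> w \<kappa>)"
      unfolding \<Phi>_def by (simp add: sum_distrib_left)
    finally show ?thesis .
  qed
  have bshift: "bet FF m (w \<circ> \<pi>) (\<kappa> \<circ> \<pi>) r = bet FF m w \<kappa> (r \<circ> pinv \<pi>)" if p: "\<pi> \<in> G" for w \<kappa> r \<pi>
    unfolding bet_def using prod_perm_shift[OF psub_perm[OF P p], of "\<lambda>s x. FF (w s) (\<kappa> s) x" r] by simp
  define \<Psi> where "\<Psi> = (\<lambda>\<pi> w \<kappa>. \<Sum>\<sigma>\<in>G. \<chi> \<sigma> * (cnj (bet FF m w \<kappa> (pinv \<pi>)) * bet FF m w \<kappa> (\<sigma> \<circ> pinv \<pi>)))"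
  have S2: "S = (\<Sum>w\<in>?W. \<Sum>\<kappa>\<in>?K. c w * \<Psi> \<pi> w \<kappa>)" if p: "\<pi> \<in> G" for \<pi>
  proof -
    have pp: "\<pi> permutes {..<m}" by (rule psub_perm[OF P p])
    have "S = (\<Sum>w\<in>?W. \<Sum>\<kappa>\<in>?K. c (w \<circ> \<pi>) * \<Phi> (w \<circ> \<pi>) \<kappa>)"
      unfolding S1 by (rule sum_PiE_perm[OF pp, symmetric, where f = "\<lambda>w. \<Sum>\<kappa>\<in>?K. c w * \<Phi> w \<kappa>"])
    also have "\<dots> = (\<Sum>w\<in>?W. \<Sum>\<kappa>\<in>?K. c (w \<circ> \<pi>) * \<Phi> (w \<circ> \<pi>) (\<kappa> \<circ> \<pi>))"
      by (intro sum.cong refl sum_PiE_perm[OF pp, symmetric])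
    also have "\<dots> = (\<Sum>w\<in>?W. \<Sum>\<kappa>\<in>?K. c w * \<Psi> \<pi> w \<kappa>)"
    proof (intro sum.cong refl)
      fix w \<kappa> assume w: "w \<in> ?W"
      have "c (w \<circ> \<pi>) = c w" using cinv p w by blast
      moreover have "\<Phi> (w \<circ> \<pi>) (\<kappa> \<circ> \<pi>) = \<Psi> \<pi> w \<kappa>"
        unfolding \<Phi>_def \<Psi>_def bshift[OF p] by simp
      ultimately show "c (w \<circ> \<pi>) * \<Phi> (w \<circ> \<pi>) (\<kappa> \<circ> \<pi>) = c w * \<Psi> \<pi> w \<kappa>" by simp
    qed
    finally show ?thesis .
  qed
  have "of_nat (card G) * S = (\<Sum>\<pi>\<in>G. S)" by simp
  also have "\<dots> = (\<Sum>\<pi>\<in>G. \<Sum>w\<in>?W. \<Sum>\<kappa>\<in>?K. c w * \<Psi> \<pi> w \<kappa>)"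
    by (rule sum.cong[OF refl]) (rule S2)
  also have "\<dots> = (\<Sum>w\<in>?W. \<Sum>\<kappa>\<in>?K. \<Sum>\<pi>\<in>G. c w * \<Psi> \<pi> w \<kappa>)"
    by (rule sw3)
  also have "\<dots> = (\<Sum>w\<in>?W. \<Sum>\<kappa>\<in>?K. c w * (\<Sum>\<pi>\<in>G. \<Psi> \<pi> w \<kappa>))"
    by (simp add: sum_distrib_left)
  finally have cS: "of_nat (card G) * S = (\<Sum>w\<in>?W. \<Sum>\<kappa>\<in>?K. c w * (\<Sum>\<pi>\<in>G. \<Psi> \<pi> w \<kappa>))" .
  have "0 \<le> (\<Sum>w\<in>?W. \<Sum>\<kappa>\<in>?K. c w * (\<Sum>\<pi>\<in>G. \<Psi> \<pi> w \<kappa>))"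
  proof -
    have "0 \<le> c w * (\<Sum>\<pi>\<in>G. \<Psi> \<pi> w \<kappa>)" if w: "w \<in> ?W" for w \<kappa>
    proof (rule mult_nonneg_nonneg)
      show "0 \<le> c w" using cnn w by blast
      show "0 \<le> (\<Sum>\<pi>\<in>G. \<Psi> \<pi> w \<kappa>)" unfolding \<Psi>_def by (rule pd_inner[OF P R chi])
    qed
    then show ?thesis by (intro sum_nonneg) auto
  qed
  then have cS0: "0 \<le> of_nat (card G) * S" using cS by simp
  have cpos: "card G > 0" using fin psub_id[OF P] card_gt_0_iff by blast
  from cS0 cpos have h: "0 \<le> real (card G) * Re S" "Im S = 0" by (simp_all add: less_eq_complex_def)
  from h(1) cpos have "0 \<le> Re S" by (simp add: zero_le_mult_iff)
  with h(2) have "0 \<le> S" by (simp add: less_eq_complex_def)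
  then show ?thesis unfolding S_def .
qed


lemma psd_to_psdf:
  assumes "psd_mat m A"
  shows "psdf m (\<lambda>a b. A $$ (a,b))"
  unfolding psdf_def
proof (intro conjI allI impI)
  fix i j assume "i < m" "j < m" then show "A $$ (i,j) = cnj (A $$ (j,i))" using assms unfolding psd_mat_def by blast
next
  fix v :: "nat \<Rightarrow> complex"
  have vc: "vec m v \<in> carrier_vec m" by simp
  have all: "\<forall>v\<in>carrier_vec m. 0 \<le> (\<Sum>i<m. \<Sum>j<m. cnj (v $ i) * A $$ (i, j) * v $ j)"
    using assms unfolding psd_mat_def by (elim conjE) assumption
  have "0 \<le> (\<Sum>i<m. \<Sum>j<m. cnj (vec m v $ i) * A $$ (i, j) * vec m v $ j)"
    using all vc by (rule bspec)
  also have "\<dots> = qf m (\<lambda>a b. A $$ (a,b)) v" unfolding qf_def by (intro sum.cong refl) simp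
  finally show "0 \<le> qf m (\<lambda>a b. A $$ (a,b)) v" .
qed

definition ind :: "nat \<Rightarrow> nat set \<Rightarrow> (nat \<Rightarrow> nat) \<Rightarrow> complex" where
  "ind m S w = (if \<forall>t<m. w t \<in> S then 1 else 0)"

lemma gen_sum:
  fixes AA :: "nat \<Rightarrow> nat \<Rightarrow> nat \<Rightarrow> complex"
  assumes P: "perm_subgroup m G" and S: "S \<subseteq> {0,1,2}"
    and M: "\<forall>\<sigma>\<in>G. \<forall>t<m. M $$ (t, \<sigma> t) = (\<Sum>i\<in>S. AA i t (\<sigma> t))"
  shows "gen_mat_fun m G \<chi> M = (\<Sum>\<sigma>\<in>G. \<Sum>w\<in>PiE {..<m} (\<lambda>_. {0,1,2}). \<chi> \<sigma> * (ind m S w * (\<Prod>t<m. AA (w t) t (\<sigma> t))))"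
  unfolding gen_mat_fun_def
proof (rule sum.cong[OF refl])
  fix \<sigma> assume s: "\<sigma> \<in> G"
  let ?W = "PiE {..<m} (\<lambda>_. {0::nat,1,2})"
  have finS: "finite S" using S finite_subset by blast
  have "(\<Prod>t<m. M $$ (t, \<sigma> t)) = (\<Prod>t<m. \<Sum>i\<in>S. AA i t (\<sigma> t))"
    using M s by (intro prod.cong refl) auto
  also have "\<dots> = (\<Sum>w\<in>PiE {..<m} (\<lambda>_. S). \<Prod>t<m. AA (w t) t (\<sigma> t))"
    by (rule prod_sum_PiE) (use finS in auto)
  also have "PiE {..<m} (\<lambda>_. S) = ?W \<inter> {w. \<forall>t<m. w t \<in> S}"
    using S by (auto simp: PiE_def Pi_def)
  also have "(\<Sum>w\<in>?W \<inter> {w. \<forall>t<m. w t \<in> S}. \<Prod>t<m. AA (w t) t (\<sigma> t))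
      = (\<Sum>w\<in>?W. if w \<in> {w. \<forall>t<m. w t \<in> S} then (\<Prod>t<m. AA (w t) t (\<sigma> t)) else 0)"
    by (rule sum.inter_restrict) (simp add: finite_PiE)
  also have "\<dots> = (\<Sum>w\<in>?W. ind m S w * (\<Prod>t<m. AA (w t) t (\<sigma> t)))"
    unfolding ind_def by (intro sum.cong refl) auto
  finally show "\<chi> \<sigma> * (\<Prod>t<m. M $$ (t, \<sigma> t)) = (\<Sum>w\<in>?W. \<chi> \<sigma> * (ind m S w * (\<Prod>t<m. AA (w t) t (\<sigma> t))))"
    by (simp add: sum_distrib_left)
qed

definition cc :: "nat \<Rightarrow> (nat \<Rightarrow> nat) \<Rightarrow> complex" where
  "cc m w = ind m {0,1,2} w + ind m {0} w + ind m {1} w + ind m {2} w - ind m {0,1} w - ind m {0,2} w - ind m {1,2} w"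

lemma cc_nonneg:
  assumes w: "w \<in> PiE {..<m} (\<lambda>_. {0,1,2})"
  shows "0 \<le> cc m w"
proof -
  define e0 where "e0 = (\<exists>t<m. w t = 0)"
  define e1 where "e1 = (\<exists>t<m. w t = 1)"
  define e2 where "e2 = (\<exists>t<m. w t = 2)"
  have wt: "w t = 0 \<or> w t = 1 \<or> w t = 2" if "t < m" for t
  proof -
    have "w t \<in> {0,1,2}" by (rule PiE_mem[OF w]) (use that in simp)
    then show ?thesis by simp
  qed
  have i0': "(\<forall>t<m. w t \<in> {0}) \<longleftrightarrow> \<not> e1 \<and> \<not> e2" unfolding e1_def e2_def using wt by fastforce
  have i1': "(\<forall>t<m. w t \<in> {1}) \<longleftrightarrow> \<not> e0 \<and> \<not> e2" unfolding e0_def e2_def using wt by fastforce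
  have i2': "(\<forall>t<m. w t \<in> {2}) \<longleftrightarrow> \<not> e0 \<and> \<not> e1" unfolding e0_def e1_def using wt by fastforce
  have i01': "(\<forall>t<m. w t \<in> {0,1}) \<longleftrightarrow> \<not> e2" unfolding e2_def using wt by fastforce
  have i02': "(\<forall>t<m. w t \<in> {0,2}) \<longleftrightarrow> \<not> e1" unfolding e1_def using wt by fastforce
  have i12': "(\<forall>t<m. w t \<in> {1,2}) \<longleftrightarrow> \<not> e0" unfolding e0_def using wt by fastforce
  have i012: "ind m {0,1,2} w = 1" using wt unfolding ind_def by auto
  have i0: "ind m {0} w = (if \<not> e1 \<and> \<not> e2 then 1 else 0)"
    unfolding ind_def i0' by (rule refl)
  have i1: "ind m {1} w = (if \<not> e0 \<and> \<not> e2 then 1 else 0)"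
    unfolding ind_def i1' by (rule refl)
  have i2: "ind m {2} w = (if \<not> e0 \<and> \<not> e1 then 1 else 0)"
    unfolding ind_def i2' by (rule refl)
  have i01: "ind m {0,1} w = (if \<not> e2 then 1 else 0)"
    unfolding ind_def i01' by (rule refl)
  have i02: "ind m {0,2} w = (if \<not> e1 then 1 else 0)"
    unfolding ind_def i02' by (rule refl)
  have i12: "ind m {1,2} w = (if \<not> e0 then 1 else 0)"
    unfolding ind_def i12' by (rule refl)
  show ?thesis unfolding cc_def i012 i0 i1 i2 i01 i02 i12
    by (cases e0; cases e1; cases e2) (simp_all add: less_eq_complex_def)
qed

lemma ind_perm:
  assumes p: "\<pi> permutes {..<m}"
  shows "ind m S (w \<circ> \<pi>) = ind m S w"
proof -
  have "(\<forall>t<m. w (\<pi> t) \<in> S) \<longleftrightarrow> (\<forall>t<m. w t \<in> S)"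
  proof
    assume h: "\<forall>t<m. w (\<pi> t) \<in> S"
    show "\<forall>t<m. w t \<in> S"
    proof (intro allI impI)
      fix t assume t: "t < m"
      have "inv_into UNIV \<pi> t < m" using permutes_in_image[OF permutes_inv[OF p]] t by auto
      then have "w (\<pi> (inv_into UNIV \<pi> t)) \<in> S" using h by blast
      then show "w t \<in> S" using permutes_inverses(1)[OF p] by simp
    qed
  next
    assume h: "\<forall>t<m. w t \<in> S"
    show "\<forall>t<m. w (\<pi> t) \<in> S" using h permutes_in_image[OF p] by auto
  qed
  then show ?thesis unfolding ind_def by simp
qed


theorem theorem3p1:
  fixes m :: nat and G :: "(nat \<Rightarrow> nat) set" and \<chi> :: "(nat \<Rightarrow> nat) \<Rightarrow> complex"
    and A1 A2 A3 :: "complex mat"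
  assumes "psd_mat m A1" "psd_mat m A2" "psd_mat m A3"
    and "perm_subgroup m G"
    and "irreducible_character G \<chi>"
  shows "0 \<le> gen_mat_fun m G \<chi> (A1 + A2 + A3) + gen_mat_fun m G \<chi> A1 + gen_mat_fun m G \<chi> A2
            + gen_mat_fun m G \<chi> A3
            - (gen_mat_fun m G \<chi> (A1 + A2) + gen_mat_fun m G \<chi> (A1 + A3) + gen_mat_fun m G \<chi> (A2 + A3))"
proof -
  note P = assms(4)
  from assms(5) obtain n \<rho> where irr: "irreducible_rep G n \<rho>" and chi: "\<forall>\<sigma>\<in>G. \<chi> \<sigma> = mat_trace (\<rho> \<sigma>)"
    unfolding irreducible_character_def by blast
  have R: "is_rep G n \<rho>" using irr unfolding irreducible_rep_def by blast
  have c1: "A1 \<in> carrier_mat m m" using assms(1) unfolding psd_mat_def by blast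
  have c2: "A2 \<in> carrier_mat m m" using assms(2) unfolding psd_mat_def by blast
  have c3: "A3 \<in> carrier_mat m m" using assms(3) unfolding psd_mat_def by blast
  obtain F1 where F1: "\<forall>i<m. \<forall>j<m. A1 $$ (i,j) = (\<Sum>k<m. cnj (F1 k i) * F1 k j)"
    using gram[OF psd_to_psdf[OF assms(1)]] by blast
  obtain F2 where F2: "\<forall>i<m. \<forall>j<m. A2 $$ (i,j) = (\<Sum>k<m. cnj (F2 k i) * F2 k j)"
    using gram[OF psd_to_psdf[OF assms(2)]] by blast
  obtain F3 where F3: "\<forall>i<m. \<forall>j<m. A3 $$ (i,j) = (\<Sum>k<m. cnj (F3 k i) * F3 k j)"
    using gram[OF psd_to_psdf[OF assms(3)]] by blast
  define AA :: "nat \<Rightarrow> nat \<Rightarrow> nat \<Rightarrow> complex" where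
    "AA = (\<lambda>i a b. if i = 0 then A1 $$ (a,b) else if i = 1 then A2 $$ (a,b) else A3 $$ (a,b))"
  define FF :: "nat \<Rightarrow> nat \<Rightarrow> nat \<Rightarrow> complex" where
    "FF = (\<lambda>i. if i = 0 then F1 else if i = 1 then F2 else F3)"
  have gramAA: "\<forall>i\<in>{0,1,2}. \<forall>a<m. \<forall>b<m. AA i a b = (\<Sum>k<m. cnj (FF i k a) * FF i k b)"
    using F1 F2 F3 unfolding AA_def FF_def by auto
  let ?W = "PiE {..<m} (\<lambda>_. {0::nat,1,2})"
  let ?X = "\<lambda>S. (\<Sum>\<sigma>\<in>G. \<Sum>w\<in>?W. \<chi> \<sigma> * (ind m S w * (\<Prod>t<m. AA (w t) t (\<sigma> t))))"
  have st: "\<sigma> t < m" if "\<sigma> \<in> G" "t < m" for \<sigma> t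
    using permutes_in_image[OF psub_perm[OF P that(1)]] that(2) by simp
  have g123: "gen_mat_fun m G \<chi> (A1 + A2 + A3) = ?X {0,1,2}"
    by (rule gen_sum[OF P]) (use c1 c2 c3 st in \<open>auto simp: AA_def\<close>)
  have g1: "gen_mat_fun m G \<chi> A1 = ?X {0}"
    by (rule gen_sum[OF P]) (auto simp: AA_def)
  have g2: "gen_mat_fun m G \<chi> A2 = ?X {1}"
    by (rule gen_sum[OF P]) (auto simp: AA_def)
  have g3: "gen_mat_fun m G \<chi> A3 = ?X {2}"
    by (rule gen_sum[OF P]) (auto simp: AA_def)
  have g12: "gen_mat_fun m G \<chi> (A1 + A2) = ?X {0,1}"
    by (rule gen_sum[OF P]) (use c1 c2 c3 st in \<open>auto simp: AA_def\<close>)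
  have g13: "gen_mat_fun m G \<chi> (A1 + A3) = ?X {0,2}"
    by (rule gen_sum[OF P]) (use c1 c2 c3 st in \<open>auto simp: AA_def\<close>)
  have g23: "gen_mat_fun m G \<chi> (A2 + A3) = ?X {1,2}"
    by (rule gen_sum[OF P]) (use c1 c2 c3 st in \<open>auto simp: AA_def\<close>)
  have comb: "?X {0,1,2} + ?X {0} + ?X {1} + ?X {2} - (?X {0,1} + ?X {0,2} + ?X {1,2})
     = (\<Sum>\<sigma>\<in>G. \<Sum>w\<in>?W. \<chi> \<sigma> * (cc m w * (\<Prod>t<m. AA (w t) t (\<sigma> t))))"
    unfolding cc_def by (simp add: ring_distribs sum.distrib sum_subtractf)
  have cnn: "\<forall>w\<in>?W. 0 \<le> cc m w" using cc_nonneg by blast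
  have cinv: "\<forall>\<pi>\<in>G. \<forall>w\<in>?W. cc m (w \<circ> \<pi>) = cc m w"
    using ind_perm[OF psub_perm[OF P]] unfolding cc_def by simp
  have "0 \<le> (\<Sum>\<sigma>\<in>G. \<Sum>w\<in>?W. \<chi> \<sigma> * (cc m w * (\<Prod>t<m. AA (w t) t (\<sigma> t))))"
    by (rule core[OF P R chi cnn cinv gramAA])
  then show ?thesis unfolding g123 g1 g2 g3 g12 g13 g23 comb .
qed


end
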